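(* Let $\Omega$ be one of NS, PPTp, or NS$\cap$PPTp. Let $\mathcal{N}:\mathcal{L}(A')\to\mathcal{L}(B)$ be a quantum channel with Choi-Kraus operator space $K=K(\mathcal{N})$, and let $k>0$. Then $F^{\Omega}(\mathcal{N},k)=1$ if and only if $D^{\Omega}(K,k)=0$. Consequently the one-shot $\Omega$-codes assisted zero-error quantum capacity depends only on $K$: $$Q_0^{\Omega,(1)}(\mathcal{N})=Q_0^{\Omega,(1)}(K)=\left\lfloor \kappa^{\Omega}(K)\right\rfloor,\qquad \kappa^{\Omega}(K):=\max\{k\ge 0: D^{\Omega}(K,k)=0\}.$$
   Context: A quantum channel $\mathcal{N}(\rho)=\sum_j E_j\rho E_j^\dagger$ from $\mathcal{L}(A')$ to $\mathcal{L}(B)$ with $\sum_j E_j^\dagger E_j=\mathbb{1}_{A'}$; $A$ is a Hilbert space isomorphic to $A'$ with orthonormal basis $\{|i\rangle\}$. The Choi-Jamiołkowski matrix is $J_{AB}=\sum_{i,j}|i\rangle\langle j|_A\otimes \mathcal{N}(|i\rangle\langle j|_{A'})$. The Choi-Kraus operator space (non-commutative bipartite graph) is $K(\mathcal{N})=\mathrm{span}\{E_j\}$, and $P_{AB}$ denotes the projection onto the support of $J_{AB}$ (it is determined by $K$). $T_B$ denotes partial transpose on $B$. For $k>0$, $F^{\Omega}(\mathcal{N},k)$ is the optimal value of the SDP: maximize $\operatorname{tr}(J_{AB}W_{AB})$ over operators $W_{AB}$ on $A\otimes B$ and $\rho_A$ on $A$ subject to $0\le W_{AB}\le \rho_A\otimes\mathbb{1}_B$,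 $\operatorname{tr}\rho_A=1$, and additionally: if $\Omega$ includes PPTp, $-\frac{1}{k}\rho_A\otimes\mathbb{1}_B\le W_{AB}^{T_B}\le \frac{1}{k}\rho_A\otimes\mathbb{1}_B$; if $\Omega$ includes NS, $\operatorname{tr}_A W_{AB}=\frac{1}{k^2}\mathbb{1}_B$. The quantity $D^{\Omega}(K,k)$ is the optimal value of the SDP with the same variables and the same constraints but objective $\operatorname{tr} P_{AB}(W_{AB}-\rho_A\otimes\mathbb{1}_B)$ (to be maximized). Define $\kappa^{\Omega}(\mathcal{N})=\max\{k\ge0: F^{\Omega}(\mathcal{N},k)=1\}$, and the one-shot $\Omega$-codes assisted zero-error quantum capacity $Q_0^{\Omega,(1)}(\mathcal{N})=\lfloor\kappa^{\Omega}(\mathcal{N})\rfloor$; $Q_0^{\Omega,(1)}(K)$ denotes $\lfloor\kappa^{\Omega}(K)\rfloor$. *)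

theory Defs
  imports "HOL-Analysis.Analysis" "HOL-Library.Extended_Real" "Jordan_Normal_Form.Schur_Decomposition"
begin

text \<open>Operators on A (x) B are complex (dA*dB) x (dA*dB) matrices, the product basis vector
  |i> (x) |b> having index i*dB + b.\<close>

definition mtrace :: "complex mat \<Rightarrow> complex" where
  "mtrace M = (\<Sum>i<dim_row M. M $$ (i,i))"

definition hermitian_mat :: "nat \<Rightarrow> complex mat \<Rightarrow> bool" where
  "hermitian_mat n M \<longleftrightarrow> M \<in> carrier_mat n n \<and> mat_adjoint M = M"

definition psd :: "nat \<Rightarrow> complex mat \<Rightarrow> bool" where
  "psd n M \<longleftrightarrow> hermitian_mat n M \<and>
     (\<forall>v \<in> carrier_vec n. Im ((M *\<^sub>v v) \<bullet>c v) = 0 \<and> Re ((M *\<^sub>v v) \<bullet>c v) \<ge> 0)"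

definition loewner_le :: "nat \<Rightarrow> complex mat \<Rightarrow> complex mat \<Rightarrow> bool" where
  "loewner_le n M N \<longleftrightarrow> M \<in> carrier_mat n n \<and> N \<in> carrier_mat n n \<and> psd n (N - M)"

definition tensor_id_B :: "nat \<Rightarrow> nat \<Rightarrow> complex mat \<Rightarrow> complex mat" where
  "tensor_id_B dA dB \<rho> = mat (dA*dB) (dA*dB)
     (\<lambda>(r,c). if r mod dB = c mod dB then \<rho> $$ (r div dB, c div dB) else 0)"

definition partial_transpose_B :: "nat \<Rightarrow> nat \<Rightarrow> complex mat \<Rightarrow> complex mat" where
  "partial_transpose_B dA dB W = mat (dA*dB) (dA*dB)
     (\<lambda>(r,c). W $$ ((r div dB) * dB + c mod dB, (c div dB) * dB + r mod dB))"

definition partial_trace_A :: "nat \<Rightarrow> nat \<Rightarrow> complex mat \<Rightarrow> complex mat" where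
  "partial_trace_A dA dB W = mat dB dB (\<lambda>(b,b'). \<Sum>i<dA. W $$ (i*dB + b, i*dB + b'))"

definition channel_apply :: "nat \<Rightarrow> complex mat list \<Rightarrow> complex mat \<Rightarrow> complex mat" where
  "channel_apply dB Es \<rho> = foldr (\<lambda>E acc. E * \<rho> * mat_adjoint E + acc) Es (0\<^sub>m dB dB)"

definition is_kraus :: "nat \<Rightarrow> nat \<Rightarrow> complex mat list \<Rightarrow> bool" where
  "is_kraus dA dB Es \<longleftrightarrow> (\<forall>E \<in> set Es. E \<in> carrier_mat dB dA) \<and>
     foldr (\<lambda>E acc. mat_adjoint E * E + acc) Es (0\<^sub>m dA dA) = 1\<^sub>m dA"

definition mat_unit :: "nat \<Rightarrow> nat \<Rightarrow> nat \<Rightarrow> complex mat" where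
  "mat_unit d i j = mat d d (\<lambda>(x,y). if x = i \<and> y = j then 1 else 0)"

text \<open>Choi-Jamiolkowski matrix J_AB = sum_{i,j} |i><j| (x) N(|i><j|).\<close>
definition choi :: "nat \<Rightarrow> nat \<Rightarrow> complex mat list \<Rightarrow> complex mat" where
  "choi dA dB Es = mat (dA*dB) (dA*dB)
     (\<lambda>(r,c). channel_apply dB Es (mat_unit dA (r div dB) (c div dB)) $$ (r mod dB, c mod dB))"

definition kraus_space :: "nat \<Rightarrow> nat \<Rightarrow> complex mat list \<Rightarrow> complex mat set" where
  "kraus_space dA dB Es = {foldr (\<lambda>(c,E) acc. c \<cdot>\<^sub>m E + acc) (zip cs Es) (0\<^sub>m dB dA)
                          | cs. length cs = length Es}"

text \<open>Vectorisation E \<mapsto> sum_i |i> (x) E|i>; the support of J_AB is the span of these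
  vectors for E in K.\<close>
definition vecK :: "nat \<Rightarrow> nat \<Rightarrow> complex mat \<Rightarrow> complex vec" where
  "vecK dA dB E = vec (dA*dB) (\<lambda>r. E $$ (r mod dB, r div dB))"

definition is_proj_onto :: "nat \<Rightarrow> complex vec set \<Rightarrow> complex mat \<Rightarrow> bool" where
  "is_proj_onto n V P \<longleftrightarrow> hermitian_mat n P \<and> P * P = P \<and>
     {P *\<^sub>v v | v. v \<in> carrier_vec n} = V"

text \<open>P_AB: orthogonal projection onto the support of J_AB, expressed through K.\<close>
definition supp_proj_K :: "nat \<Rightarrow> nat \<Rightarrow> complex mat set \<Rightarrow> complex mat" where
  "supp_proj_K dA dB K = (SOME P. is_proj_onto (dA*dB) (vecK dA dB ` K) P)"

datatype Omega = NS | PPTp | NS_PPTp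

definition has_NS :: "Omega \<Rightarrow> bool" where
  "has_NS \<Omega> \<longleftrightarrow> \<Omega> = NS \<or> \<Omega> = NS_PPTp"

definition has_PPTp :: "Omega \<Rightarrow> bool" where
  "has_PPTp \<Omega> \<longleftrightarrow> \<Omega> = PPTp \<or> \<Omega> = NS_PPTp"

definition feasible :: "Omega \<Rightarrow> nat \<Rightarrow> nat \<Rightarrow> real \<Rightarrow> (complex mat \<times> complex mat) set" where
  "feasible \<Omega> dA dB k = {(W, \<rho>). W \<in> carrier_mat (dA*dB) (dA*dB) \<and> \<rho> \<in> carrier_mat dA dA \<and>
      psd (dA*dB) W \<and> loewner_le (dA*dB) W (tensor_id_B dA dB \<rho>) \<and> mtrace \<rho> = 1 \<and>
      (has_PPTp \<Omega> \<longrightarrow>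
         loewner_le (dA*dB) (- (complex_of_real (1/k) \<cdot>\<^sub>m tensor_id_B dA dB \<rho>))
                            (partial_transpose_B dA dB W) \<and>
         loewner_le (dA*dB) (partial_transpose_B dA dB W)
                            (complex_of_real (1/k) \<cdot>\<^sub>m tensor_id_B dA dB \<rho>)) \<and>
      (has_NS \<Omega> \<longrightarrow> partial_trace_A dA dB W = complex_of_real (1/k^2) \<cdot>\<^sub>m 1\<^sub>m dB)}"

text \<open>Optimal values (supremum, = maximum since the feasible set is compact;
  -\<infinity> if infeasible).\<close>
definition F_val :: "Omega \<Rightarrow> nat \<Rightarrow> nat \<Rightarrow> complex mat list \<Rightarrow> real \<Rightarrow> ereal" where
  "F_val \<Omega> dA dB Es k = (SUP p \<in> feasible \<Omega> dA dB k. ereal (Re (mtrace (choi dA dB Es * fst p))))"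

definition D_val :: "Omega \<Rightarrow> nat \<Rightarrow> nat \<Rightarrow> complex mat set \<Rightarrow> real \<Rightarrow> ereal" where
  "D_val \<Omega> dA dB K k = (SUP p \<in> feasible \<Omega> dA dB k.
      ereal (Re (mtrace (supp_proj_K dA dB K * (fst p - tensor_id_B dA dB (snd p))))))"

definition kappa_N :: "Omega \<Rightarrow> nat \<Rightarrow> nat \<Rightarrow> complex mat list \<Rightarrow> real" where
  "kappa_N \<Omega> dA dB Es = Sup {k. k > 0 \<and> F_val \<Omega> dA dB Es k = 1}"

definition kappa_K :: "Omega \<Rightarrow> nat \<Rightarrow> nat \<Rightarrow> complex mat set \<Rightarrow> real" where
  "kappa_K \<Omega> dA dB K = Sup {k. k > 0 \<and> D_val \<Omega> dA dB K k = 0}"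

definition Q0_N :: "Omega \<Rightarrow> nat \<Rightarrow> nat \<Rightarrow> complex mat list \<Rightarrow> int" where
  "Q0_N \<Omega> dA dB Es = \<lfloor>kappa_N \<Omega> dA dB Es\<rfloor>"

definition Q0_K :: "Omega \<Rightarrow> nat \<Rightarrow> nat \<Rightarrow> complex mat set \<Rightarrow> int" where
  "Q0_K \<Omega> dA dB K = \<lfloor>kappa_K \<Omega> dA dB K\<rfloor>"

end

theory Submission
  imports Defs
begin


lemma adj_dims[simp]: "dim_row (mat_adjoint A) = dim_col A" "dim_col (mat_adjoint A) = dim_row A"
  unfolding mat_adjoint_def by auto

lemma adj_index[simp]: "i < dim_col A \<Longrightarrow> j < dim_row A \<Longrightarrow> mat_adjoint A $$ (i,j) = cnj (A $$ (j,i))"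
  unfolding mat_adjoint_def by (auto simp: mat_of_rows_index cols_def)

lemma herm_index: "hermitian_mat n P \<Longrightarrow> i < n \<Longrightarrow> j < n \<Longrightarrow> P $$ (i,j) = cnj (P $$ (j,i))"
  unfolding hermitian_mat_def by (metis adj_index carrier_matD(1,2))

lemma mtrace_mult: "A \<in> carrier_mat n n \<Longrightarrow> B \<in> carrier_mat n n \<Longrightarrow>
  mtrace (A*B) = (\<Sum>i<n. \<Sum>k<n. A$$(i,k) * B$$(k,i))"
  unfolding mtrace_def by (auto simp: scalar_prod_def atLeast0LessThan intro!: sum.cong)

definition qf :: "nat \<Rightarrow> complex mat \<Rightarrow> (nat \<Rightarrow> complex) \<Rightarrow> complex" where
  "qf n X f = (\<Sum>r<n. \<Sum>c<n. cnj (f r) * X$$(r,c) * f c)"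

lemma psd_qf: assumes "psd n X" shows "0 \<le> Re (qf n X f)"
proof -
  have X: "X \<in> carrier_mat n n" using assms unfolding psd_def hermitian_mat_def by auto
  let ?v = "vec n f"
  have "(X *\<^sub>v ?v) \<bullet>c ?v = qf n X f"
    using X unfolding qf_def by (auto simp: scalar_prod_def atLeast0LessThan sum_distrib_left mult_ac
        intro!: sum.cong)
  moreover have "0 \<le> Re ((X *\<^sub>v ?v) \<bullet>c ?v)" using assms unfolding psd_def by auto
  ultimately show ?thesis by simp
qed




lemma csp_sum: "v \<in> carrier_vec n \<Longrightarrow> w \<in> carrier_vec n \<Longrightarrow> v \<bullet>c w = (\<Sum>i<n. v$i * cnj (w$i))"
  by (auto simp: scalar_prod_def atLeast0LessThan)

lemma mv_index: "P \<in> carrier_mat n n \<Longrightarrow> x \<in> carrier_vec n \<Longrightarrow> r < n \<Longrightarrow>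
   (P *\<^sub>v x) $ r = (\<Sum>k<n. P$$(r,k) * x$k)"
  by (auto simp: scalar_prod_def atLeast0LessThan)

lemma herm_cnj: "hermitian_mat n P \<Longrightarrow> i < n \<Longrightarrow> j < n \<Longrightarrow> cnj (P $$ (j,i)) = P $$ (i,j)"
  using herm_index by metis

lemma herm_move: assumes H: "hermitian_mat n P" and z: "z \<in> carrier_vec n" and w: "w \<in> carrier_vec n"
  shows "(P *\<^sub>v z) \<bullet>c w = z \<bullet>c (P *\<^sub>v w)"
proof -
  have P: "P \<in> carrier_mat n n" using H unfolding hermitian_mat_def by auto
  have "(P *\<^sub>v z) \<bullet>c w = (\<Sum>i<n. (P *\<^sub>v z)$i * cnj (w$i))"
    by (rule csp_sum) (use P z w in auto)
  also have "\<dots> = (\<Sum>i<n. (\<Sum>k<n. P$$(i,k) * z$k) * cnj (w$i))"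
    by (intro sum.cong refl) (simp add: mv_index[OF P z])
  also have "\<dots> = (\<Sum>i<n. \<Sum>k<n. z$k * cnj (P$$(k,i) * w$i))"
    by (intro sum.cong refl, simp add: sum_distrib_left sum_distrib_right herm_cnj[OF H] mult_ac)
  also have "\<dots> = (\<Sum>k<n. \<Sum>i<n. z$k * cnj (P$$(k,i) * w$i))" by (rule sum.swap)
  also have "\<dots> = (\<Sum>k<n. z$k * cnj ((P *\<^sub>v w)$k))"
    by (intro sum.cong refl) (simp add: mv_index[OF P w] sum_distrib_left)
  also have "\<dots> = z \<bullet>c (P *\<^sub>v w)"
    by (rule csp_sum[symmetric]) (use P z w in auto)
  finally show ?thesis .
qed

lemma cnj_csp_self: "w \<in> carrier_vec n \<Longrightarrow> cnj (w \<bullet>c w) = w \<bullet>c w"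
  by (simp add: csp_sum mult.commute)

lemma proj_range_fix: "is_proj_onto n S P \<Longrightarrow> x \<in> S \<Longrightarrow> P *\<^sub>v x = x"
  unfolding is_proj_onto_def hermitian_mat_def
  by (auto simp: assoc_mult_mat_vec[symmetric])

lemma proj_zero: "is_proj_onto n {0\<^sub>v n} (0\<^sub>m n n)"
proof -
  have "{0\<^sub>m n n *\<^sub>v v | v. v \<in> carrier_vec n} = {0\<^sub>v n}"
  proof
    show "{0\<^sub>v n} \<subseteq> {0\<^sub>m n n *\<^sub>v v | v. v \<in> carrier_vec n}"
      using zero_carrier_vec[of n] by (auto intro!: exI[of _ "0\<^sub>v n"])
  qed auto
  thus ?thesis unfolding is_proj_onto_def hermitian_mat_def
    by (auto intro!: eq_matI)
qed

lemma proj_step: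
  assumes PP: "is_proj_onto n S P" and v: "v \<in> carrier_vec n"
  shows "\<exists>P'. is_proj_onto n {c \<cdot>\<^sub>v v + y | c y. y \<in> S} P'"
proof -
  have H: "hermitian_mat n P" and idem: "P * P = P" and S: "S = {P *\<^sub>v v | v. v \<in> carrier_vec n}"
    using PP unfolding is_proj_onto_def by auto
  have P: "P \<in> carrier_mat n n" using H unfolding hermitian_mat_def by auto
  define w where "w = v - P *\<^sub>v v"
  have w: "w \<in> carrier_vec n" using v P unfolding w_def by auto
  have Pw: "P *\<^sub>v w = 0\<^sub>v n"
  proof -
    have "P *\<^sub>v w = P *\<^sub>v v - P *\<^sub>v (P *\<^sub>v v)"
      unfolding w_def using P v by (simp add: mult_minus_distrib_mat_vec)
    also have "P *\<^sub>v (P *\<^sub>v v) = P *\<^sub>v v"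
      using P v idem by (metis assoc_mult_mat_vec)
    finally show ?thesis using P v by auto
  qed
  have Pz_w: "(P *\<^sub>v z) \<bullet>c w = 0" if z: "z \<in> carrier_vec n" for z
    using herm_move[OF H z w] Pw z by simp
  have Sclosed: "c \<cdot>\<^sub>v (P *\<^sub>v a) + P *\<^sub>v b = P *\<^sub>v (c \<cdot>\<^sub>v a + b)"
    if "a \<in> carrier_vec n" "b \<in> carrier_vec n" for a b c
    using that P by (simp add: mult_add_distrib_mat_vec mult_mat_vec)
  show ?thesis
  proof (cases "w = 0\<^sub>v n")
    case True
    have vP: "v = P *\<^sub>v v"
    proof -
      have "v = w + P *\<^sub>v v" unfolding w_def using v P by auto
      thus ?thesis using True P v by auto
    qed
    have "{c \<cdot>\<^sub>v v + y | c y. y \<in> S} = S"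
    proof
      show "{c \<cdot>\<^sub>v v + y | c y. y \<in> S} \<subseteq> S"
      proof
        fix x assume "x \<in> {c \<cdot>\<^sub>v v + y | c y. y \<in> S}"
        then obtain c b where x: "x = c \<cdot>\<^sub>v v + P *\<^sub>v b" and b: "b \<in> carrier_vec n"
          unfolding S by auto
        have "x = P *\<^sub>v (c \<cdot>\<^sub>v v + b)" using x vP Sclosed[OF v b, of c] by metis
        thus "x \<in> S" unfolding S using v b by auto
      qed
    next
      show "S \<subseteq> {c \<cdot>\<^sub>v v + y | c y. y \<in> S}"
      proof
        fix x assume x: "x \<in> S"
        then have "x \<in> carrier_vec n" unfolding S using P by auto
        hence "x = 0 \<cdot>\<^sub>v v + x" using v by auto
        thus "x \<in> {c \<cdot>\<^sub>v v + y | c y. y \<in> S}" using x by blast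
      qed
    qed
    thus ?thesis using PP by auto
  next
    case False
    define s where "s = w \<bullet>c w"
    have s0: "s \<noteq> 0" unfolding s_def using False w by simp
    have cs: "cnj s = s" unfolding s_def using cnj_csp_self[OF w] .
    have s_sum: "(\<Sum>k<n. cnj (w$k) * w$k) = s" unfolding s_def using w by (simp add: csp_sum mult.commute)
    define Om where "Om = mat n n (\<lambda>(r,c). w$r * cnj (w$c) / s)"
    define P' where "P' = P + Om"
    have Om: "Om \<in> carrier_mat n n" unfolding Om_def by auto
    have P': "P' \<in> carrier_mat n n" unfolding P'_def using P Om by auto
    have P'_idx: "P' $$ (r,c) = P$$(r,c) + w$r * cnj (w$c) / s" if "r < n" "c < n" for r c
      unfolding P'_def Om_def using that P by auto
    have Pw_idx: "(\<Sum>k<n. P$$(r,k) * w$k) = 0" if "r < n" for r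
      using Pw mv_index[OF P w that] that by auto
    have wP_idx: "(\<Sum>k<n. cnj (w$k) * P$$(k,c)) = 0" if c: "c < n" for c
    proof -
      have "(\<Sum>k<n. cnj (w$k) * P$$(k,c)) = cnj (\<Sum>k<n. P$$(c,k) * w$k)"
        by (auto intro!: sum.cong simp: herm_cnj[OF H _ c] mult.commute)
      thus ?thesis using Pw_idx[OF c] by simp
    qed
    have herm': "hermitian_mat n P'"
      unfolding hermitian_mat_def
    proof
      show "P' \<in> carrier_mat n n" by fact
      show "mat_adjoint P' = P'"
      proof (rule eq_matI)
        fix i j assume ij: "i < dim_row P'" "j < dim_col P'"
        hence ij': "i < n" "j < n" using P' by auto
        have "mat_adjoint P' $$ (i,j) = cnj (P' $$ (j,i))" using ij P' by auto
        also have "\<dots> = P' $$ (i,j)"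
          using ij' by (simp add: P'_idx herm_cnj[OF H] cs mult.commute)
        finally show "mat_adjoint P' $$ (i,j) = P' $$ (i,j)" .
      qed (use P' in auto)
    qed
    have idem': "P' * P' = P'"
    proof (rule eq_matI)
      fix r c assume rc: "r < dim_row P'" "c < dim_col P'"
      hence rc': "r < n" "c < n" using P' by auto
      have "(P' * P') $$ (r,c) = (\<Sum>k<n. P'$$(r,k) * P'$$(k,c))"
        using rc P' by (simp add: scalar_prod_def atLeast0LessThan)
      also have "\<dots> = (\<Sum>k<n. P$$(r,k) * P$$(k,c) + (P$$(r,k) * w$k) * (cnj (w$c) / s)
            + (w$r / s) * (cnj (w$k) * P$$(k,c))
            + (w$r * cnj (w$c) / (s * s)) * (cnj (w$k) * w$k))"
        using rc' by (intro sum.cong refl) (simp add: P'_idx field_simps s0)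
      also have "\<dots> = (\<Sum>k<n. P$$(r,k) * P$$(k,c)) + (\<Sum>k<n. P$$(r,k) * w$k) * (cnj (w$c) / s)
            + (w$r / s) * (\<Sum>k<n. cnj (w$k) * P$$(k,c))
            + (w$r * cnj (w$c) / (s * s)) * (\<Sum>k<n. cnj (w$k) * w$k)"
        by (simp add: sum.distrib sum_distrib_left sum_distrib_right sum_divide_distrib)
      also have "(\<Sum>k<n. P$$(r,k) * P$$(k,c)) = P $$ (r,c)"
      proof -
        have "(P * P) $$ (r,c) = (\<Sum>k<n. P$$(r,k) * P$$(k,c))"
          using rc' P by (simp add: scalar_prod_def atLeast0LessThan)
        thus ?thesis using idem by simp
      qed
      finally show "(P' * P') $$ (r,c) = P' $$ (r,c)"
        using rc' s0 by (simp add: Pw_idx wP_idx s_sum P'_idx)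
    qed (use P' in auto)
    have P'x: "P' *\<^sub>v x = P *\<^sub>v x + ((x \<bullet>c w) / s) \<cdot>\<^sub>v w" if x: "x \<in> carrier_vec n" for x
    proof (rule eq_vecI)
      fix r assume "r < dim_vec (P *\<^sub>v x + ((x \<bullet>c w) / s) \<cdot>\<^sub>v w)"
      hence r: "r < n" using P w by auto
      have "(P' *\<^sub>v x) $ r = (\<Sum>k<n. P'$$(r,k) * x$k)" by (rule mv_index[OF P' x r])
      also have "\<dots> = (\<Sum>k<n. P$$(r,k) * x$k + (x$k * cnj (w$k)) * (w$r / s))"
        using r by (intro sum.cong refl) (simp add: P'_idx field_simps s0)
      also have "\<dots> = (\<Sum>k<n. P$$(r,k) * x$k) + (\<Sum>k<n. x$k * cnj (w$k)) * (w$r / s)"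
        by (simp add: sum.distrib sum_distrib_right sum_divide_distrib)
      also have "\<dots> = (P *\<^sub>v x) $ r + ((x \<bullet>c w) / s) * w $ r"
        using r x w P by (simp add: mv_index[OF P x r] csp_sum[OF x w])
      finally show "(P' *\<^sub>v x) $ r = (P *\<^sub>v x + ((x \<bullet>c w) / s) \<cdot>\<^sub>v w) $ r"
        using r w P by simp
    qed (use P P' w in auto)
    have range': "{P' *\<^sub>v x | x. x \<in> carrier_vec n} = {c \<cdot>\<^sub>v v + y | c y. y \<in> S}"
    proof
      show "{P' *\<^sub>v x | x. x \<in> carrier_vec n} \<subseteq> {c \<cdot>\<^sub>v v + y | c y. y \<in> S}"
      proof
        fix y assume "y \<in> {P' *\<^sub>v x | x. x \<in> carrier_vec n}"
        then obtain x where x: "x \<in> carrier_vec n" and y: "y = P' *\<^sub>v x" by auto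
        define a where "a = (x \<bullet>c w) / s"
        have "y = a \<cdot>\<^sub>v v + P *\<^sub>v (x - a \<cdot>\<^sub>v v)"
        proof (rule eq_vecI)
          fix r assume "r < dim_vec (a \<cdot>\<^sub>v v + P *\<^sub>v (x - a \<cdot>\<^sub>v v))"
          hence r: "r < n" using v P by auto
          have e1: "(P *\<^sub>v (x - a \<cdot>\<^sub>v v)) = P *\<^sub>v x - a \<cdot>\<^sub>v (P *\<^sub>v v)"
            using P x v by (simp add: mult_minus_distrib_mat_vec mult_mat_vec)
          show "y $ r = (a \<cdot>\<^sub>v v + P *\<^sub>v (x - a \<cdot>\<^sub>v v)) $ r"
            unfolding y P'x[OF x] e1 a_def[symmetric] using r P v x unfolding w_def
            by (simp add: right_diff_distrib)
        qed (use y P' P v in auto)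
        moreover have "P *\<^sub>v (x - a \<cdot>\<^sub>v v) \<in> S" unfolding S using x v by auto
        ultimately show "y \<in> {c \<cdot>\<^sub>v v + y | c y. y \<in> S}" by blast
      qed
    next
      show "{c \<cdot>\<^sub>v v + y | c y. y \<in> S} \<subseteq> {P' *\<^sub>v x | x. x \<in> carrier_vec n}"
      proof
        fix y assume "y \<in> {c \<cdot>\<^sub>v v + y | c y. y \<in> S}"
        then obtain c z where y: "y = c \<cdot>\<^sub>v v + P *\<^sub>v z" and z: "z \<in> carrier_vec n"
          unfolding S by auto
        have yc: "y \<in> carrier_vec n" using y z v P by auto
        have vw: "v \<bullet>c w = s"
        proof -
          have "v = w + P *\<^sub>v v" unfolding w_def using v P by auto
          hence "v \<bullet>c w = (w + P *\<^sub>v v) \<bullet>c w" by simp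
          also have "\<dots> = w \<bullet>c w + (P *\<^sub>v v) \<bullet>c w"
            using w v P by (simp add: add_scalar_prod_distrib[of _ n])
          finally show ?thesis using Pz_w[OF v] s_def by simp
        qed
        have yw: "y \<bullet>c w = c * s"
        proof -
          have "y \<bullet>c w = c * (v \<bullet>c w) + (P *\<^sub>v z) \<bullet>c w"
            unfolding y using v z w P by (simp add: add_scalar_prod_distrib[of _ n])
          thus ?thesis using vw Pz_w[OF z] by simp
        qed
        have Py: "P *\<^sub>v y = c \<cdot>\<^sub>v (P *\<^sub>v v) + P *\<^sub>v z"
        proof -
          have "P *\<^sub>v y = c \<cdot>\<^sub>v (P *\<^sub>v v) + P *\<^sub>v (P *\<^sub>v z)"
            unfolding y using P v z by (simp add: mult_add_distrib_mat_vec mult_mat_vec)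
          also have "P *\<^sub>v (P *\<^sub>v z) = P *\<^sub>v z" using P z idem by (metis assoc_mult_mat_vec)
          finally show ?thesis .
        qed
        have "P' *\<^sub>v y = y"
        proof (rule eq_vecI)
          fix r assume "r < dim_vec y"
          hence r: "r < n" using yc by auto
          show "(P' *\<^sub>v y) $ r = y $ r"
            unfolding P'x[OF yc] yw Py using r s0 P v z unfolding y w_def
            by (simp add: right_diff_distrib)
        qed (use yc P' in auto)
        thus "y \<in> {P' *\<^sub>v x | x. x \<in> carrier_vec n}" using yc by (metis (mono_tags, lifting) mem_Collect_eq)
      qed
    qed
    show ?thesis using herm' idem' range' unfolding is_proj_onto_def by blast
  qed
qed




lemma ks_nil: "kraus_space dA dB [] = {0\<^sub>m dB dA}"
  unfolding kraus_space_def by auto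

lemma ks_cons: "kraus_space dA dB (E#Es) = {c \<cdot>\<^sub>m E + M | c M. M \<in> kraus_space dA dB Es}"
proof
  show "kraus_space dA dB (E#Es) \<subseteq> {c \<cdot>\<^sub>m E + M | c M. M \<in> kraus_space dA dB Es}"
  proof
    fix x assume "x \<in> kraus_space dA dB (E#Es)"
    then obtain cs where "length cs = Suc (length Es)"
       "x = foldr (\<lambda>(c,E) acc. c \<cdot>\<^sub>m E + acc) (zip cs (E#Es)) (0\<^sub>m dB dA)"
      unfolding kraus_space_def by auto
    then obtain c cs' where "length cs' = length Es"
       "x = c \<cdot>\<^sub>m E + foldr (\<lambda>(c,E) acc. c \<cdot>\<^sub>m E + acc) (zip cs' Es) (0\<^sub>m dB dA)"
      by (cases cs) auto
    thus "x \<in> {c \<cdot>\<^sub>m E + M | c M. M \<in> kraus_space dA dB Es}"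
      unfolding kraus_space_def by blast
  qed
  show "{c \<cdot>\<^sub>m E + M | c M. M \<in> kraus_space dA dB Es} \<subseteq> kraus_space dA dB (E#Es)"
  proof
    fix x assume "x \<in> {c \<cdot>\<^sub>m E + M | c M. M \<in> kraus_space dA dB Es}"
    then obtain c cs where "length cs = length Es"
      "x = c \<cdot>\<^sub>m E + foldr (\<lambda>(c,E) acc. c \<cdot>\<^sub>m E + acc) (zip cs Es) (0\<^sub>m dB dA)"
      unfolding kraus_space_def by auto
    thus "x \<in> kraus_space dA dB (E#Es)" unfolding kraus_space_def
      by (auto intro!: exI[of _ "c#cs"])
  qed
qed

lemma ks_carrier: "(\<forall>E\<in>set Es. E \<in> carrier_mat dB dA) \<Longrightarrow> M \<in> kraus_space dA dB Es \<Longrightarrow> M \<in> carrier_mat dB dA"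
  by (induction Es arbitrary: M) (auto simp: ks_nil ks_cons)

lemma ks_zero: "(\<forall>E\<in>set Es. E \<in> carrier_mat dB dA) \<Longrightarrow> 0\<^sub>m dB dA \<in> kraus_space dA dB Es"
proof (induction Es)
  case Nil thus ?case by (simp add: ks_nil)
next
  case (Cons E Es)
  hence e: "0\<^sub>m dB dA = 0 \<cdot>\<^sub>m E + 0\<^sub>m dB dA" by (auto intro!: eq_matI)
  have "0\<^sub>m dB dA \<in> kraus_space dA dB Es" using Cons by auto
  hence "0\<^sub>m dB dA \<in> {c \<cdot>\<^sub>m E + M | c M. M \<in> kraus_space dA dB Es}" using e by blast
  thus ?case unfolding ks_cons .
qed

lemma ks_mem: "(\<forall>E\<in>set Es. E \<in> carrier_mat dB dA) \<Longrightarrow> E \<in> set Es \<Longrightarrow> E \<in> kraus_space dA dB Es"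
proof (induction Es)
  case Nil thus ?case by simp
next
  case (Cons F Es)
  show ?case
  proof (cases "E = F")
    case True
    have e: "E = 1 \<cdot>\<^sub>m F + 0\<^sub>m dB dA" using True Cons.prems by (auto intro!: eq_matI)
    have "0\<^sub>m dB dA \<in> kraus_space dA dB Es" using ks_zero[of Es dB dA] Cons.prems by auto
    hence "E \<in> {c \<cdot>\<^sub>m F + M | c M. M \<in> kraus_space dA dB Es}" using e by blast
    thus ?thesis unfolding ks_cons .
  next
    case False
    hence "E \<in> kraus_space dA dB Es" using Cons by auto
    moreover have "E = 0 \<cdot>\<^sub>m F + E" using Cons.prems by (auto intro!: eq_matI)
    ultimately have "E \<in> {c \<cdot>\<^sub>m F + M | c M. M \<in> kraus_space dA dB Es}" by blast
    thus ?thesis unfolding ks_cons .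
  qed
qed

lemma idx_mod[simp]: "(r::nat) < dA * dB \<Longrightarrow> r mod dB < dB"
  by (cases "dB = 0") auto

lemma idx_div[simp]: "(r::nat) < dA * dB \<Longrightarrow> r div dB < dA"
  by (rule less_mult_imp_div_less)

lemma dim_vecK[simp]: "dim_vec (vecK dA dB E) = dA*dB"
  unfolding vecK_def by auto

lemma vecK_carrier[simp]: "vecK dA dB E \<in> carrier_vec (dA*dB)"
  unfolding vecK_def by auto

lemma vecK_index: "r < dA*dB \<Longrightarrow> vecK dA dB E $ r = E $$ (r mod dB, r div dB)"
  unfolding vecK_def by auto

lemma vecK_lin: "E \<in> carrier_mat dB dA \<Longrightarrow> M \<in> carrier_mat dB dA \<Longrightarrow>
  vecK dA dB (c \<cdot>\<^sub>m E + M) = c \<cdot>\<^sub>v vecK dA dB E + vecK dA dB M"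
  by (rule eq_vecI) (auto simp: vecK_index )

lemma vecK_zero: "vecK dA dB (0\<^sub>m dB dA) = 0\<^sub>v (dA*dB)"
  by (rule eq_vecI) (auto simp: vecK_index )

lemma vks_cons: assumes car: "\<forall>E\<in>set (F#Es). E \<in> carrier_mat dB dA" shows
  "vecK dA dB ` kraus_space dA dB (F#Es) = {c \<cdot>\<^sub>v vecK dA dB F + y | c y. y \<in> vecK dA dB ` kraus_space dA dB Es}"
proof -
  have "vecK dA dB ` {c \<cdot>\<^sub>m F + M | c M. M \<in> kraus_space dA dB Es} =
        {c \<cdot>\<^sub>v vecK dA dB F + y | c y. y \<in> vecK dA dB ` kraus_space dA dB Es}"
  proof
    show "vecK dA dB ` {c \<cdot>\<^sub>m F + M | c M. M \<in> kraus_space dA dB Es} \<subseteq>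
        {c \<cdot>\<^sub>v vecK dA dB F + y | c y. y \<in> vecK dA dB ` kraus_space dA dB Es}"
    proof
      fix x assume "x \<in> vecK dA dB ` {c \<cdot>\<^sub>m F + M | c M. M \<in> kraus_space dA dB Es}"
      then obtain c M where x: "x = vecK dA dB (c \<cdot>\<^sub>m F + M)" and M: "M \<in> kraus_space dA dB Es" by blast
      have "x = c \<cdot>\<^sub>v vecK dA dB F + vecK dA dB M"
        unfolding x using vecK_lin ks_carrier[of Es dB dA M] M car by auto
      thus "x \<in> {c \<cdot>\<^sub>v vecK dA dB F + y | c y. y \<in> vecK dA dB ` kraus_space dA dB Es}" using M by blast
    qed
    show "{c \<cdot>\<^sub>v vecK dA dB F + y | c y. y \<in> vecK dA dB ` kraus_space dA dB Es} \<subseteq>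
        vecK dA dB ` {c \<cdot>\<^sub>m F + M | c M. M \<in> kraus_space dA dB Es}"
    proof
      fix x assume "x \<in> {c \<cdot>\<^sub>v vecK dA dB F + y | c y. y \<in> vecK dA dB ` kraus_space dA dB Es}"
      then obtain c M where x: "x = c \<cdot>\<^sub>v vecK dA dB F + vecK dA dB M" and M: "M \<in> kraus_space dA dB Es" by blast
      have "x = vecK dA dB (c \<cdot>\<^sub>m F + M)"
        unfolding x using vecK_lin ks_carrier[of Es dB dA M] M car by auto
      thus "x \<in> vecK dA dB ` {c \<cdot>\<^sub>m F + M | c M. M \<in> kraus_space dA dB Es}" using M by blast
    qed
  qed
  thus ?thesis unfolding ks_cons .
qed

lemma proj_exists: "(\<forall>E\<in>set Es. E \<in> carrier_mat dB dA) \<Longrightarrow>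
  \<exists>P. is_proj_onto (dA*dB) (vecK dA dB ` kraus_space dA dB Es) P"
proof (induction Es)
  case Nil
  thus ?case using proj_zero[of "dA*dB"] by (auto simp: ks_nil vecK_zero)
next
  case (Cons F Es)
  then obtain P where "is_proj_onto (dA*dB) (vecK dA dB ` kraus_space dA dB Es) P" by auto
  from proj_step[OF this vecK_carrier] show ?case using vks_cons[OF Cons.prems] by auto
qed

lemma supp_proj: "(\<forall>E\<in>set Es. E \<in> carrier_mat dB dA) \<Longrightarrow>
  is_proj_onto (dA*dB) (vecK dA dB ` kraus_space dA dB Es) (supp_proj_K dA dB (kraus_space dA dB Es))"
  unfolding supp_proj_K_def using proj_exists by (metis someI_ex)

fun lin :: "complex list \<Rightarrow> (nat \<Rightarrow> complex) list \<Rightarrow> nat \<Rightarrow> complex" where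
  "lin (c#cs) (u#us) = (\<lambda>i. c * u i + lin cs us i)"
| "lin _ _ = (\<lambda>i. 0)"

definition vk :: "nat \<Rightarrow> complex mat \<Rightarrow> nat \<Rightarrow> complex" where
  "vk dB E r = E $$ (r mod dB, r div dB)"

lemma ks_lin: "(\<forall>E\<in>set Es. E \<in> carrier_mat dB dA) \<Longrightarrow> M \<in> kraus_space dA dB Es \<Longrightarrow>
  \<exists>cs. \<forall>r<dA*dB. vecK dA dB M $ r = lin cs (map (vk dB) Es) r"
proof (induction Es arbitrary: M)
  case Nil
  thus ?case by (auto simp: ks_nil vecK_zero intro!: exI[of _ "[]"])
next
  case (Cons F Es)
  then obtain c M' where M: "M = c \<cdot>\<^sub>m F + M'" and M': "M' \<in> kraus_space dA dB Es"
    by (auto simp: ks_cons)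
  then obtain cs where cs: "\<forall>r<dA*dB. vecK dA dB M' $ r = lin cs (map (vk dB) Es) r"
    using Cons.IH[of M'] Cons.prems M' by auto
  have "\<forall>r<dA*dB. vecK dA dB M $ r = lin (c#cs) (map (vk dB) (F#Es)) r"
    using cs Cons.prems ks_carrier[of Es dB dA M'] M' unfolding M
    by (auto simp: vecK_lin vecK_index vk_def)
  thus ?case by blast
qed

lemma qf_cong: "(\<And>r. r < n \<Longrightarrow> f r = g r) \<Longrightarrow> qf n X f = qf n X g"
  unfolding qf_def by simp

lemma qf_par: "qf n X (\<lambda>i. a i + b i) + qf n X (\<lambda>i. a i - b i) = 2 * qf n X a + 2 * qf n X b"
proof -
  have "qf n X (\<lambda>i. a i + b i) + qf n X (\<lambda>i. a i - b i) =
     (\<Sum>r<n. \<Sum>c<n. cnj (a r + b r) * X$$(r,c) * (a c + b c) + cnj (a r - b r) * X$$(r,c) * (a c - b c))"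
    unfolding qf_def by (simp add: sum.distrib)
  also have "\<dots> = (\<Sum>r<n. \<Sum>c<n. 2 * (cnj (a r) * X$$(r,c) * a c) + 2 * (cnj (b r) * X$$(r,c) * b c))"
    by (intro sum.cong refl) (simp add: algebra_simps)
  also have "\<dots> = 2 * qf n X a + 2 * qf n X b"
    unfolding qf_def by (simp add: sum.distrib sum_distrib_left)
  finally show ?thesis .
qed

lemma qf_add: assumes "psd n X"
  shows "Re (qf n X (\<lambda>i. a i + b i)) \<le> 2 * Re (qf n X a) + 2 * Re (qf n X b)"
proof -
  have "Re (qf n X (\<lambda>i. a i + b i)) + Re (qf n X (\<lambda>i. a i - b i)) = 2 * Re (qf n X a) + 2 * Re (qf n X b)"
    using arg_cong[OF qf_par, of Re, of n X a b] by simp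
  moreover have "0 \<le> Re (qf n X (\<lambda>i. a i - b i))" by (rule psd_qf[OF assms])
  ultimately show ?thesis by linarith
qed

lemma qf_scale: "qf n X (\<lambda>i. c * a i) = (cnj c * c) * qf n X a"
  unfolding qf_def by (simp add: sum_distrib_left mult_ac)

lemma qf_scale_Re: "Re (qf n X (\<lambda>i. c * a i)) = (cmod c)^2 * Re (qf n X a)"
proof -
  have "cnj c * c = complex_of_real ((cmod c)^2)"
    by (metis complex_norm_square mult.commute)
  thus ?thesis by (simp add: qf_scale)
qed

lemma qf_zero: "qf n X (\<lambda>i. 0) = 0"
  unfolding qf_def by simp

lemma lin_bound: "\<exists>C\<ge>0. \<forall>X. psd n X \<longrightarrow>
   Re (qf n X (lin cs us)) \<le> C * (\<Sum>u\<leftarrow>us. Re (qf n X u))"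
proof (induction cs us rule: lin.induct)
  case (1 c cs u us)
  then obtain C where C: "C \<ge> 0" "\<forall>X. psd n X \<longrightarrow> Re (qf n X (lin cs us)) \<le> C * (\<Sum>u\<leftarrow>us. Re (qf n X u))"
    by auto
  define D where "D = 2 * (cmod c)^2 + 2 * C"
  have "D \<ge> 0" unfolding D_def using C by auto
  moreover have "Re (qf n X (lin (c#cs) (u#us))) \<le> D * (\<Sum>u\<leftarrow>u#us. Re (qf n X u))" if X: "psd n X" for X
  proof -
    have s0: "0 \<le> (\<Sum>u\<leftarrow>us. Re (qf n X u))" by (rule sum_list_nonneg) (auto simp: psd_qf[OF X])
    have q0: "0 \<le> Re (qf n X u)" by (rule psd_qf[OF X])
    have "Re (qf n X (lin (c#cs) (u#us))) \<le> 2 * Re (qf n X (\<lambda>i. c * u i)) + 2 * Re (qf n X (lin cs us))"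
      using qf_add[OF X, of "\<lambda>i. c * u i" "lin cs us"] by simp
    also have "\<dots> \<le> 2 * (cmod c)^2 * Re (qf n X u) + 2 * C * (\<Sum>u\<leftarrow>us. Re (qf n X u))"
      using C X by (simp add: qf_scale_Re)
    also have "\<dots> \<le> D * (Re (qf n X u) + (\<Sum>u\<leftarrow>us. Re (qf n X u)))"
      unfolding D_def using s0 q0 C by (simp add: algebra_simps mult_right_mono)
    finally show ?thesis by simp
  qed
  ultimately show ?case by blast
next
  case ("2_1" v)
  thus ?case by (auto simp: qf_zero intro!: exI[of _ 0])
next
  case ("2_2" v)
  thus ?case by (auto simp: qf_zero intro!: exI[of _ 0])
qed

lemma lin_map: "lin (map a xs) (map u xs) i = (\<Sum>x\<leftarrow>xs. a x * u x i)"
  by (induction xs) auto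





lemma sum_split: fixes f :: "nat \<Rightarrow> 'a::comm_monoid_add"
  shows "(\<Sum>r<a*b. f r) = (\<Sum>i<a. \<Sum>j<b. f (i*b+j))"
proof -
  have "(\<Sum>j<b. f (i*b+j)) = sum f {i*b..<i*b+b}" for i
    using sum.atLeastLessThan_shift_0[of f "i*b" "i*b+b"] by (simp add: atLeast0LessThan comp_def)
  hence "(\<Sum>i<a. \<Sum>j<b. f (i*b+j)) = (\<Sum>i<a. sum f {i*b..<i*b+b})" by simp
  also have "\<dots> = sum f {..<a*b}" by (rule sum.nat_group)
  finally show ?thesis by simp
qed

lemma adj_carrier: "E \<in> carrier_mat m n \<Longrightarrow> mat_adjoint E \<in> carrier_mat n m"
  using adj_dims[of E] by (metis carrier_matD carrier_matI)

lemma foldr_idx: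
  assumes "\<forall>x\<in>set xs. F x \<in> carrier_mat m n"
  shows "foldr (\<lambda>x acc. F x + acc) xs (0\<^sub>m m n) \<in> carrier_mat m n \<and>
    (\<forall>i<m. \<forall>j<n. foldr (\<lambda>x acc. F x + acc) xs (0\<^sub>m m n) $$ (i,j) = (\<Sum>x\<leftarrow>xs. F x $$ (i,j)))"
  using assms by (induction xs) auto

lemma sum_list_swap: "(\<Sum>i\<in>A. \<Sum>x\<leftarrow>xs. f i x) = (\<Sum>x\<leftarrow>xs. \<Sum>i\<in>A. f i x)"
  by (induction xs) (auto simp: sum.distrib)

lemma mult_idx: assumes A: "A \<in> carrier_mat m k" and B: "B \<in> carrier_mat k n" and i: "i < m" and j: "j < n"
  shows "(A*B)$$(i,j) = (\<Sum>x<k. A$$(i,x) * B$$(x,j))"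
proof -
  have d: "dim_row A = m" "dim_col A = k" "dim_row B = k" "dim_col B = n" using A B by auto
  have "(A*B)$$(i,j) = row A i \<bullet> col B j" using i j d by (intro index_mult_mat(1)) auto
  also have "\<dots> = (\<Sum>x\<in>{0..<k}. row A i $ x * col B j $ x)" unfolding scalar_prod_def using d by simp
  also have "\<dots> = (\<Sum>x<k. A$$(i,x) * B$$(x,j))" unfolding atLeast0LessThan
    using i j d by (intro sum.cong refl) simp
  finally show ?thesis .
qed

lemma mat_unit_idx: "y < d \<Longrightarrow> x < d \<Longrightarrow> mat_unit d i j $$ (y,x) = (if y = i \<and> x = j then 1 else 0)"
  unfolding mat_unit_def by (rule trans[OF index_mat(1)]) auto

lemma mat_unit_carrier: "mat_unit d i j \<in> carrier_mat d d"
  unfolding mat_unit_def by (rule mat_carrier)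

lemma unit_prod_idx:
  assumes E: "E \<in> carrier_mat dB dA" and i: "i < dA" and j: "j < dA" and b: "b < dB" and b': "b' < dB"
  shows "(E * mat_unit dA i j * mat_adjoint E) $$ (b,b') = E$$(b,i) * cnj (E$$(b',j))"
proof -
  have U: "mat_unit dA i j \<in> carrier_mat dA dA" by (rule mat_unit_carrier)
  have EU: "(E * mat_unit dA i j) $$ (b,x) = (if x = j then E$$(b,i) else 0)" if x: "x < dA" for x
  proof -
    have "(E * mat_unit dA i j) $$ (b,x) = (\<Sum>y<dA. E$$(b,y) * mat_unit dA i j $$ (y,x))"
      by (rule mult_idx[OF E U b x])
    also have "\<dots> = (\<Sum>y<dA. if y = i then (if x = j then E$$(b,i) else 0) else 0)"
      using x by (intro sum.cong refl) (simp add: mat_unit_idx)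
    also have "\<dots> = (if x = j then E$$(b,i) else 0)" using i by simp
    finally show ?thesis .
  qed
  have "(E * mat_unit dA i j * mat_adjoint E) $$ (b,b') =
      (\<Sum>x<dA. (E * mat_unit dA i j) $$ (b,x) * mat_adjoint E $$ (x,b'))"
    by (rule mult_idx[OF mult_carrier_mat[OF E U] adj_carrier[OF E] b b'])
  also have "\<dots> = (\<Sum>x<dA. if x = j then E$$(b,i) * cnj (E$$(b',j)) else 0)"
  proof (intro sum.cong refl)
    fix x assume "x \<in> {..<dA}"
    hence x: "x < dA" by simp
    have "mat_adjoint E $$ (x,b') = cnj (E $$ (b',x))" using x b' E by simp
    thus "(E * mat_unit dA i j) $$ (b,x) * mat_adjoint E $$ (x,b') = (if x = j then E$$(b,i) * cnj (E$$(b',j)) else 0)"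
      using EU[OF x] by simp
  qed
  also have "\<dots> = E$$(b,i) * cnj (E$$(b',j))" using j by simp
  finally show ?thesis .
qed




lemma choi_idx:
  assumes K: "\<forall>E\<in>set Es. E \<in> carrier_mat dB dA" and r: "r < dA*dB" and c: "c < dA*dB"
  shows "choi dA dB Es $$ (r,c) = (\<Sum>E\<leftarrow>Es. vk dB E r * cnj (vk dB E c))"
proof -
  let ?U = "mat_unit dA (r div dB) (c div dB)"
  have U: "?U \<in> carrier_mat dA dA" unfolding mat_unit_def by auto
  have car: "\<forall>E\<in>set Es. E * ?U * mat_adjoint E \<in> carrier_mat dB dB"
  proof
    fix E assume "E \<in> set Es"
    hence E: "E \<in> carrier_mat dB dA" using K by auto
    show "E * ?U * mat_adjoint E \<in> carrier_mat dB dB"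
      using mult_carrier_mat[OF mult_carrier_mat[OF E U] adj_carrier[OF E]] .
  qed
  have "choi dA dB Es $$ (r,c) = channel_apply dB Es ?U $$ (r mod dB, c mod dB)"
    unfolding choi_def using r c by simp
  also have "\<dots> = (\<Sum>E\<leftarrow>Es. (E * ?U * mat_adjoint E) $$ (r mod dB, c mod dB))"
    unfolding channel_apply_def using foldr_idx[OF car] r c by simp
  also have "\<dots> = (\<Sum>E\<leftarrow>Es. vk dB E r * cnj (vk dB E c))"
  proof (intro arg_cong[where f=sum_list] map_cong refl)
    fix E assume "E \<in> set Es"
    hence E: "E \<in> carrier_mat dB dA" using K by auto
    show "(E * ?U * mat_adjoint E) $$ (r mod dB, c mod dB) = vk dB E r * cnj (vk dB E c)"
      unfolding vk_def by (rule unit_prod_idx[OF E idx_div[OF r] idx_div[OF c] idx_mod[OF r] idx_mod[OF c]])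
  qed
  finally show ?thesis .
qed




lemma tr_choi:
  assumes K: "\<forall>E\<in>set Es. E \<in> carrier_mat dB dA" and X: "X \<in> carrier_mat (dA*dB) (dA*dB)"
  shows "mtrace (choi dA dB Es * X) = (\<Sum>E\<leftarrow>Es. qf (dA*dB) X (vk dB E))"
proof -
  let ?n = "dA*dB"
  have C: "choi dA dB Es \<in> carrier_mat ?n ?n" unfolding choi_def by auto
  have "mtrace (choi dA dB Es * X) = (\<Sum>i<?n. \<Sum>k<?n. choi dA dB Es $$ (i,k) * X$$(k,i))"
    by (rule mtrace_mult[OF C X])
  also have "\<dots> = (\<Sum>i<?n. \<Sum>k<?n. \<Sum>E\<leftarrow>Es. vk dB E i * cnj (vk dB E k) * X$$(k,i))"
    using K by (intro sum.cong refl) (simp add: choi_idx sum_list_mult_const)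
  also have "\<dots> = (\<Sum>E\<leftarrow>Es. \<Sum>i<?n. \<Sum>k<?n. vk dB E i * cnj (vk dB E k) * X$$(k,i))"
    by (simp add: sum_list_swap)
  also have "\<dots> = (\<Sum>E\<leftarrow>Es. qf ?n X (vk dB E))"
    unfolding qf_def
    by (intro arg_cong[where f=sum_list] map_cong refl, subst sum.swap) (simp add: mult_ac)
  finally show ?thesis .
qed




lemma tr_proj:
  assumes H: "hermitian_mat n P" and idem: "P * P = P" and X: "X \<in> carrier_mat n n"
  shows "mtrace (P * X) = (\<Sum>k<n. qf n X (\<lambda>a. P$$(a,k)))"
proof -
  have P: "P \<in> carrier_mat n n" using H unfolding hermitian_mat_def by auto
  have Pidx: "P$$(b,a) = (\<Sum>k<n. P$$(b,k) * cnj (P$$(a,k)))" if "b < n" "a < n" for a b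
  proof -
    have "P$$(b,a) = (P*P)$$(b,a)" using idem by simp
    also have "\<dots> = (\<Sum>k<n. P$$(b,k) * P$$(k,a))"
      using that P by (simp add: scalar_prod_def atLeast0LessThan)
    also have "\<dots> = (\<Sum>k<n. P$$(b,k) * cnj (P$$(a,k)))"
      using that by (intro sum.cong refl) (simp add: herm_cnj[OF H])
    finally show ?thesis .
  qed
  have "mtrace (P * X) = (\<Sum>b<n. \<Sum>a<n. P$$(b,a) * X$$(a,b))" by (rule mtrace_mult[OF P X])
  also have "\<dots> = (\<Sum>b<n. \<Sum>a<n. \<Sum>k<n. P$$(b,k) * cnj (P$$(a,k)) * X$$(a,b))"
  proof (intro sum.cong refl)
    fix b a assume "b \<in> {..<n}" "a \<in> {..<n}"
    then show "P$$(b,a) * X$$(a,b) = (\<Sum>k<n. P$$(b,k) * cnj (P$$(a,k)) * X$$(a,b))"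
      using Pidx[of b a] by (simp add: sum_distrib_right)
  qed
  also have "\<dots> = (\<Sum>k<n. \<Sum>a<n. \<Sum>b<n. cnj (P$$(a,k)) * X$$(a,b) * P$$(b,k))"
  proof -
    have "(\<Sum>b<n. \<Sum>a<n. \<Sum>k<n. P$$(b,k) * cnj (P$$(a,k)) * X$$(a,b))
        = (\<Sum>b<n. \<Sum>k<n. \<Sum>a<n. P$$(b,k) * cnj (P$$(a,k)) * X$$(a,b))"
      by (rule sum.cong[OF refl], rule sum.swap)
    also have "\<dots> = (\<Sum>k<n. \<Sum>b<n. \<Sum>a<n. P$$(b,k) * cnj (P$$(a,k)) * X$$(a,b))"
      by (rule sum.swap)
    also have "\<dots> = (\<Sum>k<n. \<Sum>a<n. \<Sum>b<n. P$$(b,k) * cnj (P$$(a,k)) * X$$(a,b))"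
      by (rule sum.cong[OF refl], rule sum.swap)
    finally show ?thesis by (simp add: mult_ac)
  qed
  also have "\<dots> = (\<Sum>k<n. qf n X (\<lambda>a. P$$(a,k)))" unfolding qf_def by simp
  finally show ?thesis .
qed





lemma idx_comb: "(i::nat) < dA \<Longrightarrow> b < dB \<Longrightarrow> i*dB + b < dA*dB"
proof -
  assume i: "i < dA" and b: "b < dB"
  have "i*dB + b < i*dB + dB" using b by simp
  also have "\<dots> = (i+1)*dB" by simp
  also have "\<dots> \<le> dA*dB" using i by (intro mult_right_mono) auto
  finally show ?thesis .
qed

lemma idx_split: "(b::nat) < dB \<Longrightarrow> (i*dB + b) mod dB = b \<and> (i*dB + b) div dB = i"
  by simp

lemma tensor_idx: assumes i: "i < dA" "i' < dA" and b: "b < dB" "b' < dB"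
  shows "tensor_id_B dA dB \<rho> $$ (i*dB+b, i'*dB+b') = (if b = b' then \<rho> $$ (i,i') else 0)"
proof -
  have "tensor_id_B dA dB \<rho> $$ (i*dB+b, i'*dB+b') =
     (if (i*dB+b) mod dB = (i'*dB+b') mod dB then \<rho> $$ ((i*dB+b) div dB, (i'*dB+b') div dB) else 0)"
    unfolding tensor_id_B_def using idx_comb[OF i(1) b(1)] idx_comb[OF i(2) b(2)] by simp
  moreover have "(i*dB+b) mod dB = b" "(i*dB+b) div dB = i" "(i'*dB+b') mod dB = b'" "(i'*dB+b') div dB = i'"
    using idx_split[OF b(1), of i] idx_split[OF b(2), of i'] by auto
  ultimately show ?thesis by (simp only:)
qed

lemma tensor_carrier: "tensor_id_B dA dB \<rho> \<in> carrier_mat (dA*dB) (dA*dB)"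
  unfolding tensor_id_B_def by (rule mat_carrier)

lemma qf_tensor:
  shows "qf (dA*dB) (tensor_id_B dA dB \<rho>) (vk dB E) =
    (\<Sum>i<dA. \<Sum>i'<dA. \<rho> $$ (i,i') * (\<Sum>b<dB. cnj (E$$(b,i)) * E$$(b,i')))"
proof -
  let ?T = "tensor_id_B dA dB \<rho>"
  have summand: "cnj (vk dB E (i*dB+b)) * ?T $$ (i*dB+b, i'*dB+b') * vk dB E (i'*dB+b') =
     (if b' = b then cnj (E$$(b,i)) * \<rho>$$(i,i') * E$$(b,i') else 0)"
    if "i < dA" "i' < dA" "b < dB" "b' < dB" for i i' b b'
    using tensor_idx[OF that(1,2) that(3,4), of \<rho>] idx_split[OF that(3), of i] idx_split[OF that(4), of i']
    unfolding vk_def by auto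
  have "qf (dA*dB) ?T (vk dB E) = (\<Sum>i<dA. \<Sum>b<dB. \<Sum>i'<dA. \<Sum>b'<dB.
      cnj (vk dB E (i*dB+b)) * ?T $$ (i*dB+b, i'*dB+b') * vk dB E (i'*dB+b'))"
    unfolding qf_def by (simp only: sum_split)
  also have "\<dots> = (\<Sum>i<dA. \<Sum>b<dB. \<Sum>i'<dA. \<Sum>b'<dB.
      (if b' = b then cnj (E$$(b,i)) * \<rho>$$(i,i') * E$$(b,i') else 0))"
    by (intro sum.cong refl) (simp add: summand)
  also have "\<dots> = (\<Sum>i<dA. \<Sum>b<dB. \<Sum>i'<dA. cnj (E$$(b,i)) * \<rho>$$(i,i') * E$$(b,i'))"
    by (intro sum.cong refl) simp
  also have "\<dots> = (\<Sum>i<dA. \<Sum>i'<dA. \<Sum>b<dB. cnj (E$$(b,i)) * \<rho>$$(i,i') * E$$(b,i'))"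
    by (rule sum.cong[OF refl], rule sum.swap)
  also have "\<dots> = (\<Sum>i<dA. \<Sum>i'<dA. \<rho> $$ (i,i') * (\<Sum>b<dB. cnj (E$$(b,i)) * E$$(b,i')))"
    by (simp add: sum_distrib_left mult_ac)
  finally show ?thesis .
qed

lemma kraus_entries:
  assumes kr: "is_kraus dA dB Es" and i: "i < dA" and j: "j < dA"
  shows "(\<Sum>E\<leftarrow>Es. \<Sum>b<dB. cnj (E$$(b,i)) * E$$(b,j)) = (if i = j then 1 else 0)"
proof -
  have K: "\<forall>E\<in>set Es. E \<in> carrier_mat dB dA" and eq: "foldr (\<lambda>E acc. mat_adjoint E * E + acc) Es (0\<^sub>m dA dA) = 1\<^sub>m dA"
    using kr unfolding is_kraus_def by auto
  have car: "\<forall>E\<in>set Es. mat_adjoint E * E \<in> carrier_mat dA dA"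
  proof
    fix E assume "E \<in> set Es"
    hence E: "E \<in> carrier_mat dB dA" using K by auto
    show "mat_adjoint E * E \<in> carrier_mat dA dA" using mult_carrier_mat[OF adj_carrier[OF E] E] .
  qed
  have "(\<Sum>E\<leftarrow>Es. (mat_adjoint E * E) $$ (i,j)) = 1\<^sub>m dA $$ (i,j)"
  proof -
    have "foldr (\<lambda>E acc. mat_adjoint E * E + acc) Es (0\<^sub>m dA dA) $$ (i,j) = (\<Sum>E\<leftarrow>Es. (mat_adjoint E * E)$$(i,j))"
      using foldr_idx[OF car] i j by blast
    thus ?thesis unfolding eq by simp
  qed
  also have "\<dots> = (if i = j then 1 else 0)" using i j by simp
  also have "(\<Sum>E\<leftarrow>Es. (mat_adjoint E * E) $$ (i,j)) = (\<Sum>E\<leftarrow>Es. \<Sum>b<dB. cnj (E$$(b,i)) * E$$(b,j))"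
  proof (intro arg_cong[where f=sum_list] map_cong refl)
    fix E assume "E \<in> set Es"
    hence E: "E \<in> carrier_mat dB dA" using K by auto
    have "(mat_adjoint E * E) $$ (i,j) = (\<Sum>b<dB. mat_adjoint E $$ (i,b) * E$$(b,j))"
      by (rule mult_idx[OF adj_carrier[OF E] E i j])
    also have "\<dots> = (\<Sum>b<dB. cnj (E$$(b,i)) * E$$(b,j))"
      using E i by (intro sum.cong refl) simp
    finally show "(mat_adjoint E * E) $$ (i,j) = (\<Sum>b<dB. cnj (E$$(b,i)) * E$$(b,j))" .
  qed
  finally show ?thesis by simp
qed

lemma tr_choi_tensor:
  assumes kr: "is_kraus dA dB Es" and rho: "\<rho> \<in> carrier_mat dA dA"
  shows "mtrace (choi dA dB Es * tensor_id_B dA dB \<rho>) = mtrace \<rho>"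
proof -
  have K: "\<forall>E\<in>set Es. E \<in> carrier_mat dB dA" using kr unfolding is_kraus_def by auto
  have "mtrace (choi dA dB Es * tensor_id_B dA dB \<rho>) =
      (\<Sum>E\<leftarrow>Es. \<Sum>i<dA. \<Sum>i'<dA. \<rho> $$ (i,i') * (\<Sum>b<dB. cnj (E$$(b,i)) * E$$(b,i')))"
    by (simp add: tr_choi[OF K tensor_carrier] qf_tensor)
  also have "\<dots> = (\<Sum>i<dA. \<Sum>i'<dA. \<Sum>E\<leftarrow>Es. \<rho> $$ (i,i') * (\<Sum>b<dB. cnj (E$$(b,i)) * E$$(b,i')))"
    by (simp add: sum_list_swap)
  also have "\<dots> = (\<Sum>i<dA. \<Sum>i'<dA. \<rho> $$ (i,i') * (if i = i' then 1 else 0))"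
    by (intro sum.cong refl) (simp add: sum_list_const_mult kraus_entries[OF kr])
  also have "\<dots> = (\<Sum>i<dA. \<rho> $$ (i,i))"
  proof (intro sum.cong refl)
    fix i assume i: "i \<in> {..<dA}"
    have "(\<Sum>i'<dA. \<rho> $$ (i,i') * (if i = i' then 1 else 0)) = (\<Sum>i'<dA. if i = i' then \<rho> $$ (i,i') else 0)"
      by (intro sum.cong refl) auto
    also have "\<dots> = \<rho> $$ (i,i)" using i by (simp add: sum.delta)
    finally show "(\<Sum>i'<dA. \<rho> $$ (i,i') * (if i = i' then 1 else 0)) = \<rho> $$ (i,i)" .
  qed
  also have "\<dots> = mtrace \<rho>" unfolding mtrace_def using rho by simp
  finally show ?thesis .
qed

lemma Re_sum_list: "Re (\<Sum>x\<leftarrow>xs. f x) = (\<Sum>x\<leftarrow>xs. Re (f x))"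
  by (induction xs) auto

lemma lsum_upt: "(\<Sum>k\<leftarrow>[0..<n]. g k) = (\<Sum>k<n. g k)"
  by (simp add: sum_set_upt_conv_sum_list_nat[symmetric] atLeast0LessThan)




lemma sup_char:
  fixes h :: "'p \<Rightarrow> real"
  assumes h0: "\<forall>p\<in>S. 0 \<le> h p"
  shows "(SUP p\<in>S. ereal (a - h p)) = ereal a \<longleftrightarrow> (\<forall>e>0. \<exists>p\<in>S. h p < e)"
proof
  assume eq: "(SUP p\<in>S. ereal (a - h p)) = ereal a"
  show "\<forall>e>0. \<exists>p\<in>S. h p < e"
  proof (rule ccontr)
    assume "\<not> (\<forall>e>0. \<exists>p\<in>S. h p < e)"
    then obtain e where e: "e > 0" "\<forall>p\<in>S. e \<le> h p" by (auto simp: not_less)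
    have "(SUP p\<in>S. ereal (a - h p)) \<le> ereal (a - e)"
      using e by (intro SUP_least) auto
    thus False using eq e by simp
  qed
next
  assume H: "\<forall>e>0. \<exists>p\<in>S. h p < e"
  show "(SUP p\<in>S. ereal (a - h p)) = ereal a"
  proof (rule antisym)
    show "(SUP p\<in>S. ereal (a - h p)) \<le> ereal a" using h0 by (intro SUP_least) auto
    show "ereal a \<le> (SUP p\<in>S. ereal (a - h p))"
    proof (rule ereal_le_epsilon2)
      fix e :: real assume e: "0 < e"
      then obtain p where p: "p \<in> S" "h p < e" using H by auto
      have "ereal a \<le> ereal (a - h p) + ereal e" using p by simp
      also have "\<dots> \<le> (SUP p\<in>S. ereal (a - h p)) + ereal e"
        using p by (intro add_right_mono SUP_upper) auto
      finally show "ereal a \<le> (SUP p\<in>S. ereal (a - h p)) + ereal e" .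
    qed
  qed
qed

lemma inf_equiv:
  fixes f g :: "'p \<Rightarrow> real"
  assumes f0: "\<forall>p\<in>S. 0 \<le> f p" and C: "C \<ge> 0" and gf: "\<forall>p\<in>S. g p \<le> C * f p"
    and H: "\<forall>e>0. \<exists>p\<in>S. f p < e"
  shows "\<forall>e>0. \<exists>p\<in>S. g p < e"
proof (intro allI impI)
  fix e :: real assume e: "e > 0"
  have "e / (C+1) > 0" using e C by simp
  then obtain p where p: "p \<in> S" "f p < e / (C+1)" using H by blast
  have "g p \<le> C * f p" using gf p by auto
  also have "\<dots> \<le> (C+1) * f p" using f0 p by (simp add: algebra_simps)
  also have "\<dots> < (C+1) * (e / (C+1))" using p C by (intro mult_strict_left_mono) auto
  also have "\<dots> = e" using C by simp
  finally show "\<exists>p\<in>S. g p < e" using p by blast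
qed

lemma mtrace_minus: "A \<in> carrier_mat n n \<Longrightarrow> B \<in> carrier_mat n n \<Longrightarrow> mtrace (A - B) = mtrace A - mtrace B"
  unfolding mtrace_def by (simp add: sum_subtractf)

lemma psd_carrier: "psd n X \<Longrightarrow> X \<in> carrier_mat n n"
  unfolding psd_def hermitian_mat_def by auto

lemma bounds:
  assumes kr: "is_kraus dA dB Es"
  shows "\<exists>C1\<ge>0. \<forall>X. psd (dA*dB) X \<longrightarrow>
      Re (mtrace (supp_proj_K dA dB (kraus_space dA dB Es) * X)) \<le> C1 * Re (mtrace (choi dA dB Es * X))"
    and "\<exists>C2\<ge>0. \<forall>X. psd (dA*dB) X \<longrightarrow>
      Re (mtrace (choi dA dB Es * X)) \<le> C2 * Re (mtrace (supp_proj_K dA dB (kraus_space dA dB Es) * X))"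
    and "psd (dA*dB) X \<Longrightarrow> 0 \<le> Re (mtrace (supp_proj_K dA dB (kraus_space dA dB Es) * X))"
    and "psd (dA*dB) X \<Longrightarrow> 0 \<le> Re (mtrace (choi dA dB Es * X))"
proof -
  let ?n = "dA*dB"
  let ?P = "supp_proj_K dA dB (kraus_space dA dB Es)"
  let ?V = "vecK dA dB ` kraus_space dA dB Es"
  have K: "\<forall>E\<in>set Es. E \<in> carrier_mat dB dA" using kr unfolding is_kraus_def by auto
  have PP: "is_proj_onto ?n ?V ?P" by (rule supp_proj[OF K])
  have H: "hermitian_mat ?n ?P" and idem: "?P * ?P = ?P" and rng: "{?P *\<^sub>v v | v. v \<in> carrier_vec ?n} = ?V"
    using PP unfolding is_proj_onto_def by auto
  have Pc: "?P \<in> carrier_mat ?n ?n" using H unfolding hermitian_mat_def by auto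
  let ?us = "map (vk dB) Es"
  let ?ws = "map (\<lambda>k a. ?P $$ (a,k)) [0..<?n]"
  have fX: "Re (mtrace (choi dA dB Es * X)) = (\<Sum>u\<leftarrow>?us. Re (qf ?n X u))" if X: "psd ?n X" for X
    using tr_choi[OF K psd_carrier[OF X]] by (simp add: Re_sum_list o_def)
  have gX: "Re (mtrace (?P * X)) = (\<Sum>u\<leftarrow>?ws. Re (qf ?n X u))" if X: "psd ?n X" for X
    using tr_proj[OF H idem psd_carrier[OF X]] by (simp add: o_def lsum_upt)
  show f0: "psd ?n X \<Longrightarrow> 0 \<le> Re (mtrace (choi dA dB Es * X))" for X
  proof -
    assume X: "psd ?n X"
    have "0 \<le> (\<Sum>u\<leftarrow>?us. Re (qf ?n X u))" by (rule sum_list_nonneg) (auto simp: psd_qf[OF X])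
    thus ?thesis by (simp only: fX[OF X])
  qed
  show g0: "psd ?n X \<Longrightarrow> 0 \<le> Re (mtrace (?P * X))" for X
  proof -
    assume X: "psd ?n X"
    have "0 \<le> (\<Sum>u\<leftarrow>?ws. Re (qf ?n X u))" by (rule sum_list_nonneg) (auto simp: psd_qf[OF X])
    thus ?thesis by (simp only: gX[OF X])
  qed
  have A: "\<forall>k. \<exists>C. k < ?n \<longrightarrow> C \<ge> 0 \<and> (\<forall>X. psd ?n X \<longrightarrow> Re (qf ?n X (\<lambda>a. ?P $$ (a,k))) \<le> C * (\<Sum>u\<leftarrow>?us. Re (qf ?n X u)))"
  proof (intro allI)
    fix k
    show "\<exists>C. k < ?n \<longrightarrow> C \<ge> 0 \<and> (\<forall>X. psd ?n X \<longrightarrow> Re (qf ?n X (\<lambda>a. ?P $$ (a,k))) \<le> C * (\<Sum>u\<leftarrow>?us. Re (qf ?n X u)))"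
    proof (cases "k < ?n")
      case True
      have "?P *\<^sub>v unit_vec ?n k \<in> ?V" using rng[symmetric] by auto
      then obtain M where M: "M \<in> kraus_space dA dB Es" and y: "?P *\<^sub>v unit_vec ?n k = vecK dA dB M" by auto
      obtain cs where cs: "\<forall>r<?n. vecK dA dB M $ r = lin cs ?us r" using ks_lin[OF K M] by auto
      have "\<forall>r<?n. ?P $$ (r,k) = lin cs ?us r"
      proof (intro allI impI)
        fix r assume r: "r < ?n"
        have "?P $$ (r,k) = (?P *\<^sub>v unit_vec ?n k) $ r" using r True Pc by simp
        thus "?P $$ (r,k) = lin cs ?us r" using y cs r by simp
      qed
      hence q: "qf ?n X (\<lambda>a. ?P $$ (a,k)) = qf ?n X (lin cs ?us)" for X by (intro qf_cong) auto
      obtain C where "C \<ge> 0" "\<forall>X. psd ?n X \<longrightarrow> Re (qf ?n X (lin cs ?us)) \<le> C * (\<Sum>u\<leftarrow>?us. Re (qf ?n X u))"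
        using lin_bound[of ?n cs ?us] by blast
      thus ?thesis using q by metis
    qed auto
  qed
  then obtain CA where CA: "\<forall>k<?n. CA k \<ge> 0 \<and> (\<forall>X. psd ?n X \<longrightarrow> Re (qf ?n X (\<lambda>a. ?P $$ (a,k))) \<le> CA k * (\<Sum>u\<leftarrow>?us. Re (qf ?n X u)))"
    by metis
  show "\<exists>C1\<ge>0. \<forall>X. psd ?n X \<longrightarrow> Re (mtrace (?P * X)) \<le> C1 * Re (mtrace (choi dA dB Es * X))"
  proof (intro exI[of _ "\<Sum>k<?n. CA k"] conjI allI impI)
    show "0 \<le> (\<Sum>k<?n. CA k)" using CA by (intro sum_nonneg) auto
    fix X assume X: "psd ?n X"
    have "Re (mtrace (?P * X)) = (\<Sum>k<?n. Re (qf ?n X (\<lambda>a. ?P $$ (a,k))))"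
      by (simp add: gX[OF X] o_def lsum_upt)
    also have "\<dots> \<le> (\<Sum>k<?n. CA k * (\<Sum>u\<leftarrow>?us. Re (qf ?n X u)))"
      using CA X by (intro sum_mono) auto
    also have "\<dots> = (\<Sum>k<?n. CA k) * Re (mtrace (choi dA dB Es * X))"
      by (simp add: fX[OF X] sum_distrib_right)
    finally show "Re (mtrace (?P * X)) \<le> (\<Sum>k<?n. CA k) * Re (mtrace (choi dA dB Es * X))" .
  qed
  have B: "\<forall>E. \<exists>C. E \<in> set Es \<longrightarrow> C \<ge> 0 \<and> (\<forall>X. psd ?n X \<longrightarrow> Re (qf ?n X (vk dB E)) \<le> C * (\<Sum>u\<leftarrow>?ws. Re (qf ?n X u)))"
  proof (intro allI)
    fix E
    show "\<exists>C. E \<in> set Es \<longrightarrow> C \<ge> 0 \<and> (\<forall>X. psd ?n X \<longrightarrow> Re (qf ?n X (vk dB E)) \<le> C * (\<Sum>u\<leftarrow>?ws. Re (qf ?n X u)))"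
    proof (cases "E \<in> set Es")
      case True
      have "vecK dA dB E \<in> ?V" using ks_mem[OF K True] by auto
      hence Pfix: "?P *\<^sub>v vecK dA dB E = vecK dA dB E" by (rule proj_range_fix[OF PP])
      let ?cs = "map (\<lambda>k. vk dB E k) [0..<?n]"
      have "\<forall>r<?n. vk dB E r = lin ?cs ?ws r"
      proof (intro allI impI)
        fix r assume r: "r < ?n"
        have "vk dB E r = vecK dA dB E $ r" using r by (simp add: vecK_index vk_def)
        also have "\<dots> = (?P *\<^sub>v vecK dA dB E) $ r" using Pfix by simp
        also have "\<dots> = (\<Sum>k<?n. ?P $$ (r,k) * vecK dA dB E $ k)" by (rule mv_index[OF Pc vecK_carrier r])
        also have "\<dots> = (\<Sum>k<?n. vk dB E k * ?P $$ (r,k))"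
          by (intro sum.cong refl) (simp add: vecK_index vk_def)
        also have "\<dots> = lin ?cs ?ws r"
          using lin_map[of "\<lambda>k. vk dB E k" "[0..<?n]" "\<lambda>k a. ?P $$ (a,k)" r] by (simp add: lsum_upt)
        finally show "vk dB E r = lin ?cs ?ws r" .
      qed
      hence q: "qf ?n X (vk dB E) = qf ?n X (lin ?cs ?ws)" for X by (intro qf_cong) auto
      obtain C where "C \<ge> 0" "\<forall>X. psd ?n X \<longrightarrow> Re (qf ?n X (lin ?cs ?ws)) \<le> C * (\<Sum>u\<leftarrow>?ws. Re (qf ?n X u))"
        using lin_bound[of ?n ?cs ?ws] by blast
      thus ?thesis using q by metis
    qed auto
  qed
  then obtain CB where CB: "\<forall>E\<in>set Es. CB E \<ge> 0 \<and> (\<forall>X. psd ?n X \<longrightarrow> Re (qf ?n X (vk dB E)) \<le> CB E * (\<Sum>u\<leftarrow>?ws. Re (qf ?n X u)))"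
    by metis
  show "\<exists>C2\<ge>0. \<forall>X. psd ?n X \<longrightarrow> Re (mtrace (choi dA dB Es * X)) \<le> C2 * Re (mtrace (?P * X))"
  proof (intro exI[of _ "\<Sum>E\<leftarrow>Es. CB E"] conjI allI impI)
    show "0 \<le> (\<Sum>E\<leftarrow>Es. CB E)" using CB by (intro sum_list_nonneg) auto
    fix X assume X: "psd ?n X"
    have "Re (mtrace (choi dA dB Es * X)) = (\<Sum>E\<leftarrow>Es. Re (qf ?n X (vk dB E)))"
      by (simp add: fX[OF X] o_def)
    also have "\<dots> \<le> (\<Sum>E\<leftarrow>Es. CB E * (\<Sum>u\<leftarrow>?ws. Re (qf ?n X u)))"
      using CB X by (intro sum_list_mono) auto
    also have "\<dots> = (\<Sum>E\<leftarrow>Es. CB E) * Re (mtrace (?P * X))"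
      by (simp add: gX[OF X] sum_list_mult_const)
    finally show "Re (mtrace (choi dA dB Es * X)) \<le> (\<Sum>E\<leftarrow>Es. CB E) * Re (mtrace (?P * X))" .
  qed
qed




lemma feas_facts:
  assumes "p \<in> feasible \<Omega> dA dB k"
  shows "fst p \<in> carrier_mat (dA*dB) (dA*dB)" "snd p \<in> carrier_mat dA dA"
    "psd (dA*dB) (tensor_id_B dA dB (snd p) - fst p)" "mtrace (snd p) = 1"
proof -
  obtain W \<rho> where p: "p = (W, \<rho>)" by (cases p)
  show "fst p \<in> carrier_mat (dA*dB) (dA*dB)" "snd p \<in> carrier_mat dA dA"
    "psd (dA*dB) (tensor_id_B dA dB (snd p) - fst p)" "mtrace (snd p) = 1"
    using assms unfolding p feasible_def loewner_le_def by auto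
qed

lemma main_k:
  assumes kr: "is_kraus dA dB Es"
  shows "F_val \<Omega> dA dB Es k = 1 \<longleftrightarrow> D_val \<Omega> dA dB (kraus_space dA dB Es) k = 0"
proof -
  let ?n = "dA*dB"
  let ?P = "supp_proj_K dA dB (kraus_space dA dB Es)"
  let ?J = "choi dA dB Es"
  let ?S = "feasible \<Omega> dA dB k"
  let ?T = "\<lambda>p. tensor_id_B dA dB (snd p)"
  let ?X = "\<lambda>p. ?T p - fst p"
  define f where "f p = Re (mtrace (?J * ?X p))" for p
  define g where "g p = Re (mtrace (?P * ?X p))" for p
  have K: "\<forall>E\<in>set Es. E \<in> carrier_mat dB dA" using kr unfolding is_kraus_def by auto
  have Jc: "?J \<in> carrier_mat ?n ?n" unfolding choi_def by auto
  have Pc: "?P \<in> carrier_mat ?n ?n" using supp_proj[OF K] unfolding is_proj_onto_def hermitian_mat_def by auto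
  have Fv: "Re (mtrace (?J * fst p)) = 1 - f p" if p: "p \<in> ?S" for p
  proof -
    note ff = feas_facts[OF p]
    have Tc: "?T p \<in> carrier_mat ?n ?n" by (rule tensor_carrier)
    have "mtrace (?J * ?X p) = mtrace (?J * ?T p) - mtrace (?J * fst p)"
      using Jc Tc ff(1) by (simp add: mult_minus_distrib_mat[OF Jc Tc ff(1)] mtrace_minus[of _ ?n])
    moreover have "mtrace (?J * ?T p) = 1" using tr_choi_tensor[OF kr ff(2)] ff(4) by simp
    ultimately show ?thesis unfolding f_def by simp
  qed
  have Dv: "Re (mtrace (?P * (fst p - ?T p))) = 0 - g p" if p: "p \<in> ?S" for p
  proof -
    note ff = feas_facts[OF p]
    have Tc: "?T p \<in> carrier_mat ?n ?n" by (rule tensor_carrier)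
    have "mtrace (?P * ?X p) = mtrace (?P * ?T p) - mtrace (?P * fst p)"
      unfolding mult_minus_distrib_mat[OF Pc Tc ff(1)]
      by (rule mtrace_minus[OF mult_carrier_mat[OF Pc Tc] mult_carrier_mat[OF Pc ff(1)]])
    moreover have "mtrace (?P * (fst p - ?T p)) = mtrace (?P * fst p) - mtrace (?P * ?T p)"
      unfolding mult_minus_distrib_mat[OF Pc ff(1) Tc]
      by (rule mtrace_minus[OF mult_carrier_mat[OF Pc ff(1)] mult_carrier_mat[OF Pc Tc]])
    ultimately show ?thesis unfolding g_def by simp
  qed
  have Fval: "F_val \<Omega> dA dB Es k = (SUP p\<in>?S. ereal (1 - f p))"
    unfolding F_val_def using Fv by (intro SUP_cong refl) simp
  have Dval: "D_val \<Omega> dA dB (kraus_space dA dB Es) k = (SUP p\<in>?S. ereal (0 - g p))"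
    unfolding D_val_def using Dv by (intro SUP_cong refl) simp
  have f0: "\<forall>p\<in>?S. 0 \<le> f p" unfolding f_def using bounds(4)[OF kr] feas_facts(3) by blast
  have g0: "\<forall>p\<in>?S. 0 \<le> g p" unfolding g_def using bounds(3)[OF kr] feas_facts(3) by blast
  obtain C1 where C1: "C1 \<ge> 0" "\<forall>p\<in>?S. g p \<le> C1 * f p"
    using bounds(1)[OF kr] feas_facts(3) unfolding f_def g_def by metis
  obtain C2 where C2: "C2 \<ge> 0" "\<forall>p\<in>?S. f p \<le> C2 * g p"
    using bounds(2)[OF kr] feas_facts(3) unfolding f_def g_def by metis
  have "F_val \<Omega> dA dB Es k = 1 \<longleftrightarrow> (\<forall>e>0. \<exists>p\<in>?S. f p < e)"
    unfolding Fval one_ereal_def by (rule sup_char[OF f0])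
  also have "\<dots> \<longleftrightarrow> (\<forall>e>0. \<exists>p\<in>?S. g p < e)"
    using inf_equiv[OF f0 C1] inf_equiv[OF g0 C2] by blast
  also have "\<dots> \<longleftrightarrow> D_val \<Omega> dA dB (kraus_space dA dB Es) k = 0"
    unfolding Dval zero_ereal_def by (rule sup_char[OF g0, symmetric])
  finally show ?thesis .
qed

theorem theorem1:
  fixes \<Omega> :: Omega and dA dB :: nat and Es :: "complex mat list"
  assumes "is_kraus dA dB Es"
  shows "(\<forall>k::real. k > 0 \<longrightarrow>
           (F_val \<Omega> dA dB Es k = 1 \<longleftrightarrow> D_val \<Omega> dA dB (kraus_space dA dB Es) k = 0)) \<and>
         Q0_N \<Omega> dA dB Es = Q0_K \<Omega> dA dB (kraus_space dA dB Es) \<and>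
         Q0_K \<Omega> dA dB (kraus_space dA dB Es) = \<lfloor>kappa_K \<Omega> dA dB (kraus_space dA dB Es)\<rfloor>"
proof (intro conjI)
  show "\<forall>k::real. k > 0 \<longrightarrow>
           (F_val \<Omega> dA dB Es k = 1 \<longleftrightarrow> D_val \<Omega> dA dB (kraus_space dA dB Es) k = 0)"
    using main_k[OF assms] by blast
  have "{k. k > 0 \<and> F_val \<Omega> dA dB Es k = 1} = {k. k > 0 \<and> D_val \<Omega> dA dB (kraus_space dA dB Es) k = 0}"
    using main_k[OF assms] by blast
  thus "Q0_N \<Omega> dA dB Es = Q0_K \<Omega> dA dB (kraus_space dA dB Es)"
    unfolding Q0_N_def Q0_K_def kappa_N_def kappa_K_def by simp
  show "Q0_K \<Omega> dA dB (kraus_space dA dB Es) = \<lfloor>kappa_K \<Omega> dA dB (kraus_space dA dB Es)\<rfloor>"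
    unfolding Q0_K_def ..
qed


end
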